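(* Let $\ell \geq 2$ be an integer and let $G$ be the following "caterpillar" graph on $6\ell-1$ vertices. Its spine is a path $B_0^{L}, B_1^{L}, \ldots, B_{\ell-1}^{L}, B_\ell, B_{\ell-1}^{R}, \ldots, B_1^{R}, B_0^{R}$ of $2\ell+1$ vertices (consecutive vertices adjacent). For each $j \in \{1,\ldots,\ell-1\}$ and each side $\sigma \in \{L,R\}$, the spine vertex $B_j^{\sigma}$ carries two additional pendant (degree-one) vertices, both called $C_j$ (one "above" and one "below"); the central vertex $B_\ell$ carries two pendant vertices, both called $C_\ell$; the endpoints $B_0^{L},B_0^{R}$ carry no pendant vertices. Write $B_j$ for either copy $B_j^L,B_j^R$. Define the potential $W$ (the same value on all vertices sharing a label) by $W(B_0)=0$; $W(B_j)=-\tfrac12-\tfrac{j}{4\ell}$ for $j\in\{1,\ldots,\ell\}$; $W(C_1)=\frac{1}{\frac{11}{12}-\frac{1}{8\ell}}-1$; $W(C_j)=\frac{1}{\frac23-\frac{j}{8\ell}}-1$ for $j\in\{2,\ldots,\ell-1\}$; $W(C_\ell)=7$. Then every vertex other than $B_\ell$ has a neighbor with strictly smaller potential (so $B_\ell$ is the unique local minimum and the unique global minimum of $W$), and the gap $\gamma$ between the smallest and second-smallest eigenvalues of $H_{G,W}$ satisfies $$\gamma < 2\left(\tfrac{2}{3}\right)^{2\ell-1}.$$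
   Context: For a finite simple undirected graph $G$ with vertex set $V_G$, let $\mathcal{H}_G$ be the complex Hilbert space with orthonormal basis $\{|x\rangle : x\in V_G\}$. The graph Laplacian is $L_G=\sum_{x} d_x |x\rangle\langle x| - \sum_{x\sim y}|x\rangle\langle y|$, where $d_x$ is the degree of $x$ and the second sum runs over ordered pairs of adjacent vertices. For a potential $W:V_G\to\mathbb{R}$, $H_{G,W}=L_G+\sum_{x} W(x)|x\rangle\langle x|$. A vertex $x$ is a local minimum of $W$ if $W(x)\le W(y)$ for all neighbors $y$ of $x$. *)

theory Defs
  imports "Jordan_Normal_Form.Char_Poly" "HOL-Library.Multiset"
begin

text \<open>Graphs on the vertex set {0..<n}, given by a symmetric irreflexive adjacency relation E.
  The Hilbert space is C^n with the standard basis; operators are complex n x n matrices.\<close>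

definition degree_of :: "nat \<Rightarrow> (nat \<Rightarrow> nat \<Rightarrow> bool) \<Rightarrow> nat \<Rightarrow> nat" where
  "degree_of n E x = card {y. y < n \<and> E x y}"

definition laplacian :: "nat \<Rightarrow> (nat \<Rightarrow> nat \<Rightarrow> bool) \<Rightarrow> complex mat" where
  "laplacian n E = mat n n (\<lambda>(x, y).
      (if x = y then of_nat (degree_of n E x) else 0) - (if E x y then 1 else 0))"

definition hamiltonian :: "nat \<Rightarrow> (nat \<Rightarrow> nat \<Rightarrow> bool) \<Rightarrow> (nat \<Rightarrow> real) \<Rightarrow> complex mat" where
  "hamiltonian n E W = laplacian n E + mat n n (\<lambda>(x, y). if x = y then complex_of_real (W x) else 0)"

text \<open>Eigenvalues counted with algebraic multiplicity (roots of the characteristic polynomial),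
  in increasing order. For a Hermitian matrix all eigenvalues are real, so taking real parts
  loses nothing.\<close>

definition sorted_eigenvalues :: "complex mat \<Rightarrow> real list" where
  "sorted_eigenvalues A = sorted_list_of_multiset (image_mset Re (proots (char_poly A)))"

definition spectral_gap :: "complex mat \<Rightarrow> real" where
  "spectral_gap A = sorted_eigenvalues A ! 1 - sorted_eigenvalues A ! 0"

definition local_min :: "nat \<Rightarrow> (nat \<Rightarrow> nat \<Rightarrow> bool) \<Rightarrow> (nat \<Rightarrow> real) \<Rightarrow> nat \<Rightarrow> bool" where
  "local_min n E W x = (\<forall>y < n. E x y \<longrightarrow> W x \<le> W y)"

text \<open>Encoding for parameter l: spine vertices 0..2l are the path
  B_0^L, B_1^L, ..., B_{l-1}^L, B_l, B_{l-1}^R, ..., B_0^R (so vertex i is at index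
  level i = min i (2l-i), and B_l = vertex l). The pendant vertices are 2l+1 .. 6l-2;
  pendant v is attached to spine vertex cat_par l v in {1..2l-1}, and each such spine vertex
  carries exactly two pendants.\<close>

definition cat_n :: "nat \<Rightarrow> nat" where
  "cat_n l = 6 * l - 1"

definition cat_level :: "nat \<Rightarrow> nat \<Rightarrow> nat" where
  "cat_level l i = min i (2 * l - i)"

definition cat_par :: "nat \<Rightarrow> nat \<Rightarrow> nat" where
  "cat_par l v = (v - (2 * l + 1)) div 2 + 1"

definition cat_adj :: "nat \<Rightarrow> nat \<Rightarrow> nat \<Rightarrow> bool" where
  "cat_adj l u v =
     ((u \<le> 2 * l \<and> v \<le> 2 * l \<and> (u = v + 1 \<or> v = u + 1))
      \<or> (2 * l < u \<and> u < cat_n l \<and> v = cat_par l u)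
      \<or> (2 * l < v \<and> v < cat_n l \<and> u = cat_par l v))"

text \<open>Potential: spine vertex of level j is B_j, pendant attached to a spine vertex of level j
  is C_j.\<close>

definition cat_W :: "nat \<Rightarrow> nat \<Rightarrow> real" where
  "cat_W l v =
     (if v \<le> 2 * l then
        (let j = cat_level l v in
           if j = 0 then 0 else - 1/2 - real j / (4 * real l))
      else
        (let j = cat_level l (cat_par l v) in
           if j = l then 7
           else if j = 1 then 1 / (11/12 - 1 / (8 * real l)) - 1
           else 1 / (2/3 - real j / (8 * real l)) - 1))"

end

theory Submission
  imports Defs "Jordan_Normal_Form.Spectral_Radius"
begin

lemma cs_real:
  fixes a b :: "nat \<Rightarrow> real"
  shows "(\<Sum>i\<in>I. a i * b i)^2 \<le> (\<Sum>i\<in>I. (a i)^2) * (\<Sum>i\<in>I. (b i)^2)"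
proof -
  have "0 \<le> (\<Sum>i\<in>I. \<Sum>j\<in>I. (a i * b j - a j * b i)^2)"
    by (intro sum_nonneg) auto
  also have "\<dots> = (\<Sum>i\<in>I. \<Sum>j\<in>I. (a i)^2 * (b j)^2 + (a j)^2 * (b i)^2 - 2 * ((a i * b i) * (a j * b j)))"
    by (intro sum.cong refl) (simp add: power2_eq_square algebra_simps)
  also have "\<dots> = 2 * ((\<Sum>i\<in>I. (a i)^2) * (\<Sum>i\<in>I. (b i)^2) - (\<Sum>i\<in>I. a i * b i)^2)"
  proof -
    have e1: "(\<Sum>i\<in>I. \<Sum>j\<in>I. (a i)^2 * (b j)^2) = (\<Sum>i\<in>I. (a i)^2) * (\<Sum>i\<in>I. (b i)^2)"
      by (simp add: sum_product)
    have e2: "(\<Sum>i\<in>I. \<Sum>j\<in>I. (a j)^2 * (b i)^2) = (\<Sum>i\<in>I. (a i)^2) * (\<Sum>i\<in>I. (b i)^2)"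
      using e1 sum.swap[of "\<lambda>i j. (a j)^2 * (b i)^2" I I] by simp
    have e3: "(\<Sum>i\<in>I. \<Sum>j\<in>I. 2 * ((a i * b i) * (a j * b j))) = 2 * (\<Sum>i\<in>I. a i * b i)^2"
      by (simp add: sum_product power2_eq_square sum_distrib_left sum_distrib_right mult.commute mult.left_commute)
    show ?thesis
      by (simp only: sum_subtractf sum.distrib e1 e2 e3) (simp add: algebra_simps)
  qed
  finally show ?thesis by simp
qed

definition ip :: "nat \<Rightarrow> complex vec \<Rightarrow> complex vec \<Rightarrow> complex" where
  "ip n u v = (\<Sum>i<n. cnj (u $ i) * v $ i)"

definition nsq :: "nat \<Rightarrow> complex vec \<Rightarrow> real" where
  "nsq n u = (\<Sum>i<n. (cmod (u $ i))^2)"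

lemma ip_self: "ip n u u = of_real (nsq n u)"
  unfolding ip_def nsq_def of_real_sum by (intro sum.cong refl) (simp add: complex_norm_square mult.commute del: of_real_power)

lemma nsq_nonneg: "0 \<le> nsq n u" unfolding nsq_def by (intro sum_nonneg) auto

lemma cs_complex: "(cmod (ip n u v))^2 \<le> nsq n u * nsq n v"
proof -
  have "cmod (ip n u v) \<le> (\<Sum>i<n. cmod (u $ i) * cmod (v $ i))"
    unfolding ip_def by (rule order.trans[OF norm_sum]) (simp add: norm_mult)
  hence "(cmod (ip n u v))^2 \<le> (\<Sum>i<n. cmod (u $ i) * cmod (v $ i))^2"
    by (intro power_mono) auto
  also have "\<dots> \<le> nsq n u * nsq n v" unfolding nsq_def by (rule cs_real)
  finally show ?thesis .
qed

lemma mult_mat_vec_sum: assumes "A \<in> carrier_mat n n" "v \<in> carrier_vec n" "i < n"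
  shows "(A *\<^sub>v v) $ i = (\<Sum>j<n. A $$ (i,j) * v $ j)"
  using assms by (auto simp: scalar_prod_def row_def lessThan_atLeast0 intro!: sum.cong)

lemma ip_herm: assumes A: "A \<in> carrier_mat n n" and u: "u \<in> carrier_vec n" and v: "v \<in> carrier_vec n"
  and herm: "\<And>i j. i < n \<Longrightarrow> j < n \<Longrightarrow> A $$ (i,j) = cnj (A $$ (j,i))"
  shows "ip n u (A *\<^sub>v v) = ip n (A *\<^sub>v u) v"
proof -
  have hh: "cnj (A $$ (j,i)) = A $$ (i,j)" if "i < n" "j < n" for i j
    using herm[OF that] by simp
  have "ip n u (A *\<^sub>v v) = (\<Sum>i<n. \<Sum>j<n. cnj (u $ i) * A $$ (i,j) * v $ j)"
    unfolding ip_def using A v by (intro sum.cong refl) (simp add: mult_mat_vec_sum sum_distrib_left mult.assoc del: index_mult_mat_vec)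
  also have "\<dots> = (\<Sum>j<n. \<Sum>i<n. cnj (u $ i) * A $$ (i,j) * v $ j)" by (rule sum.swap)
  also have "\<dots> = (\<Sum>j<n. cnj (\<Sum>i<n. A $$ (j,i) * u $ i) * v $ j)"
    by (intro sum.cong refl) (simp add: sum_distrib_right sum_distrib_left hh mult.commute mult.left_commute)
  also have "\<dots> = ip n (A *\<^sub>v u) v"
    unfolding ip_def using A u by (intro sum.cong refl) (simp add: mult_mat_vec_sum del: index_mult_mat_vec)
  finally show ?thesis .
qed

lemma pow_mat_Suc_left: assumes A: "A \<in> carrier_mat n n"
  shows "A ^\<^sub>m Suc k = A * A ^\<^sub>m k"
proof (induction k)
  case 0 then show ?case using A by simp
next
  case (Suc k)
  have "A ^\<^sub>m Suc (Suc k) = (A * A ^\<^sub>m k) * A" using Suc by simp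
  also have "\<dots> = A * (A ^\<^sub>m k * A)" using A by (intro assoc_mult_mat) auto
  finally show ?case by simp
qed


lemma power_contra:
  fixes N :: "complex mat" and \<phi> :: "complex vec" and \<rho> :: real
  assumes N: "N \<in> carrier_mat n n"
  and herm: "\<And>i j. i < n \<Longrightarrow> j < n \<Longrightarrow> N $$ (i,j) = cnj (N $$ (j,i))"
  and phi: "\<phi> \<in> carrier_vec n" and pos: "nsq n \<phi> > 0"
  and ray: "\<rho> * nsq n \<phi> \<le> Re (ip n \<phi> (N *\<^sub>v \<phi>))" and rho: "\<rho> > 1"
  and sr: "spectral_radius N < 1"
  shows False
proof -
  from char_poly_factorized[OF N] obtain as where "char_poly N = (\<Prod>a\<leftarrow>as. [:- a, 1:])" by auto
  from jordan_nf_exists[OF N this] have "\<exists>n_as. jordan_nf N n_as" .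
  from spectral_radius_jnf_norm_bound_less_1[OF N sr this]
  obtain C where C: "\<And>k. norm_bound (N ^\<^sub>m k) C" by auto
  define u where "u k = (N ^\<^sub>m k) *\<^sub>v \<phi>" for k
  have uc: "u k \<in> carrier_vec n" for k unfolding u_def using N phi pow_carrier_mat[OF N, of k] by (intro mult_mat_vec_carrier) auto
  have uS: "u (Suc k) = N *\<^sub>v u k" for k
  proof -
    have "u (Suc k) = (N * N ^\<^sub>m k) *\<^sub>v \<phi>" unfolding u_def pow_mat_Suc_left[OF N] ..
    also have "\<dots> = N *\<^sub>v u k" unfolding u_def using N phi by (intro assoc_mult_mat_vec) auto
    finally show ?thesis .
  qed
  define a where "a k = nsq n (u k)" for k
  have a0: "a 0 = nsq n \<phi>" unfolding a_def u_def using phi N by (simp add: carrier_matD)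
  have anneg: "0 \<le> a k" for k unfolding a_def by (rule nsq_nonneg)
  have key: "(a (Suc k))^2 \<le> a k * a (Suc (Suc k))" for k
  proof -
    have "complex_of_real (a (Suc k)) = ip n (u (Suc k)) (u (Suc k))" unfolding a_def ip_self ..
    also have "\<dots> = ip n (N *\<^sub>v u k) (N *\<^sub>v u k)" unfolding uS ..
    also have "\<dots> = ip n (u k) (N *\<^sub>v (N *\<^sub>v u k))"
      by (rule ip_herm[symmetric, OF N uc _ herm]) (use N uc in auto)
    also have "\<dots> = ip n (u k) (u (Suc (Suc k)))" unfolding uS ..
    finally have eq: "complex_of_real (a (Suc k)) = ip n (u k) (u (Suc (Suc k)))" .
    have "(a (Suc k))^2 = (cmod (ip n (u k) (u (Suc (Suc k)))))^2"
      unfolding eq[symmetric] using anneg[of "Suc k"] by simp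
    also have "\<dots> \<le> a k * a (Suc (Suc k))" unfolding a_def by (rule cs_complex)
    finally show ?thesis .
  qed
  have base: "\<rho>^2 * a 0 \<le> a 1"
  proof -
    have u1: "u 1 = N *\<^sub>v \<phi>" using uS[of 0] unfolding u_def using phi N by (simp add: carrier_matD)
    have "\<rho> * a 0 \<le> cmod (ip n (u 0) (u 1))"
      using ray a0 u1 complex_Re_le_cmod[of "ip n \<phi> (N *\<^sub>v \<phi>)"] unfolding u_def using phi N by (simp add: carrier_matD)
    hence "(\<rho> * a 0)^2 \<le> (cmod (ip n (u 0) (u 1)))^2"
      using rho anneg[of 0] by (intro power_mono) auto
    also have "\<dots> \<le> a 0 * a 1" unfolding a_def by (rule cs_complex)
    finally have "\<rho>^2 * a 0 * a 0 \<le> a 1 * a 0" by (simp add: power2_eq_square algebra_simps)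
    thus ?thesis using pos a0 by simp
  qed
  have step: "0 < a k \<and> \<rho>^2 * a k \<le> a (Suc k)" for k
  proof (induction k)
    case 0 then show ?case using base pos a0 by simp
  next
    case (Suc k)
    hence ak: "0 < a k" and r: "\<rho>^2 * a k \<le> a (Suc k)" by auto
    have r2: "1 < \<rho>^2" using rho by (simp add: one_less_power)
    have pos1: "0 < a (Suc k)" using ak r r2 by (smt (verit) mult_less_cancel_right2)
    have "\<rho>^2 * a k * a (Suc k) \<le> a (Suc k) * a (Suc k)"
      using r pos1 by (intro mult_right_mono) auto
    also have "\<dots> \<le> a k * a (Suc (Suc k))" using key[of k] by (simp add: power2_eq_square)
    finally have "a k * (\<rho>^2 * a (Suc k)) \<le> a k * a (Suc (Suc k))" by (simp add: algebra_simps)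
    hence "\<rho>^2 * a (Suc k) \<le> a (Suc (Suc k))" using ak by simp
    thus ?case using pos1 by simp
  qed
  have lower: "(\<rho>^2)^k * a 0 \<le> a k" for k
  proof (induction k)
    case 0 then show ?case by simp
  next
    case (Suc k)
    have "(\<rho>^2)^Suc k * a 0 = \<rho>^2 * ((\<rho>^2)^k * a 0)" by simp
    also have "\<dots> \<le> \<rho>^2 * a k" using Suc by (intro mult_left_mono) auto
    also have "\<dots> \<le> a (Suc k)" using step[of k] by simp
    finally show ?case .
  qed
  define S where "S = (\<Sum>j<n. cmod (\<phi> $ j))"
  have upper: "a k \<le> real n * (C * S)^2" for k
  proof -
    have ent: "cmod (u k $ i) \<le> C * S" if i: "i < n" for i
    proof -
      have "u k $ i = (\<Sum>j<n. (N ^\<^sub>m k) $$ (i,j) * \<phi> $ j)"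
        unfolding u_def using N phi i by (intro mult_mat_vec_sum) auto
      hence "cmod (u k $ i) \<le> (\<Sum>j<n. cmod ((N ^\<^sub>m k) $$ (i,j)) * cmod (\<phi> $ j))"
        by (auto intro: order.trans[OF norm_sum] simp: norm_mult)
      also have "\<dots> \<le> (\<Sum>j<n. C * cmod (\<phi> $ j))"
        using C[of k] N i unfolding norm_bound_def by (intro sum_mono mult_right_mono) auto
      finally show ?thesis unfolding S_def by (simp add: sum_distrib_left)
    qed
    have "a k \<le> (\<Sum>i<n. (C * S)^2)" unfolding a_def nsq_def
      using ent by (intro sum_mono power_mono) auto
    thus ?thesis by simp
  qed
  have r2: "1 < \<rho>^2" using rho by (simp add: one_less_power)
  from real_arch_pow[OF r2, of "real n * (C * S)^2 / a 0"]
  obtain k where k: "real n * (C * S)^2 / a 0 < (\<rho>^2)^k" by auto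
  hence "real n * (C * S)^2 < (\<rho>^2)^k * a 0" using pos a0 by (simp add: divide_less_eq)
  with lower[of k] upper[of k] show False by simp
qed


definition hr :: "nat \<Rightarrow> (nat \<Rightarrow> nat \<Rightarrow> bool) \<Rightarrow> (nat \<Rightarrow> real) \<Rightarrow> nat \<Rightarrow> nat \<Rightarrow> real" where
  "hr n E W i j = (if i = j then real (degree_of n E i) + W i else 0) - (if E i j then 1 else 0)"

lemma hamiltonian_carrier: "hamiltonian n E W \<in> carrier_mat n n"
  unfolding hamiltonian_def laplacian_def by auto

lemma hamiltonian_index: "i < n \<Longrightarrow> j < n \<Longrightarrow> hamiltonian n E W $$ (i,j) = complex_of_real (hr n E W i j)"
  unfolding hamiltonian_def laplacian_def hr_def by auto

lemma gs_term:
  fixes p q :: real and a b :: complex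
  assumes "p > 0" "q > 0"
  shows "complex_of_real (p * q * (cmod (a / of_real p - b / of_real q))^2)
    = of_real (q / p) * (cnj a * a) + of_real (p / q) * (cnj b * b) - cnj a * b - cnj b * a"
proof -
  have "complex_of_real ((cmod (a / of_real p - b / of_real q))^2)
        = (a / of_real p - b / of_real q) * cnj (a / of_real p - b / of_real q)"
    by (rule complex_norm_square)
  hence "complex_of_real (p * q * (cmod (a / of_real p - b / of_real q))^2)
        = of_real p * of_real q * ((a / of_real p - b / of_real q) * (cnj a / of_real p - cnj b / of_real q))"
    by simp
  also have "\<dots> = of_real (q / p) * (cnj a * a) + of_real (p / q) * (cnj b * b) - cnj a * b - cnj b * a"
    using assms by (simp add: field_simps)
  finally show ?thesis .
qed

locale gstate =
  fixes n :: nat and E :: "nat \<Rightarrow> nat \<Rightarrow> bool" and W :: "nat \<Rightarrow> real" and \<psi> :: "nat \<Rightarrow> real"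
  assumes sym: "\<And>x y. E x y = E y x"
  and irr: "\<And>x. \<not> E x x"
  and psi_pos: "\<And>x. x < n \<Longrightarrow> \<psi> x > 0"
  and eq: "\<And>x. x < n \<Longrightarrow> (real (degree_of n E x) + W x) * \<psi> x = (\<Sum>y<n. if E x y then \<psi> y else 0)"
begin

abbreviation "H \<equiv> hamiltonian n E W"

definition gsf :: "complex vec \<Rightarrow> real" where
  "gsf v = (\<Sum>x<n. \<Sum>y<n. if E x y then \<psi> x * \<psi> y * (cmod (v $ x / of_real (\<psi> x) - v $ y / of_real (\<psi> y)))^2 / 2 else 0)"

lemma gsf_nonneg: "0 \<le> gsf v"
  unfolding gsf_def
proof (intro sum_nonneg)
  fix x y assume "x \<in> {..<n}" "y \<in> {..<n}"
  then show "0 \<le> (if E x y then \<psi> x * \<psi> y * (cmod (v $ x / of_real (\<psi> x) - v $ y / of_real (\<psi> y)))^2 / 2 else 0)"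
    using psi_pos[of x] psi_pos[of y] by simp
qed

lemma herm: "i < n \<Longrightarrow> j < n \<Longrightarrow> H $$ (i,j) = cnj (H $$ (j,i))"
  by (simp add: hamiltonian_index hr_def sym)

lemma form: assumes v: "v \<in> carrier_vec n"
  shows "ip n v (H *\<^sub>v v) = complex_of_real (gsf v)"
proof -
  define T where "T x y = (if E x y then of_real (\<psi> y / \<psi> x) * (cnj (v $ x) * v $ x) - cnj (v $ x) * v $ y else 0)" for x y
  have row: "cnj (v $ x) * (H *\<^sub>v v) $ x = (\<Sum>y<n. T x y)" if x: "x < n" for x
  proof -
    have "(H *\<^sub>v v) $ x = (\<Sum>y<n. complex_of_real (hr n E W x y) * v $ y)"
      unfolding mult_mat_vec_sum[OF hamiltonian_carrier v x] by (intro sum.cong refl) (simp add: hamiltonian_index x)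
    also have "\<dots> = (\<Sum>y<n. (if x = y then of_real (real (degree_of n E x) + W x) * v $ y else 0)
                   - (if E x y then v $ y else 0))"
      by (intro sum.cong refl) (simp add: hr_def algebra_simps)
    also have "\<dots> = (\<Sum>y<n. (if x = y then of_real (real (degree_of n E x) + W x) * v $ y else 0))
                   - (\<Sum>y<n. if E x y then v $ y else 0)"
      by (rule sum_subtractf)
    also have "\<dots> = of_real (real (degree_of n E x) + W x) * v $ x - (\<Sum>y<n. if E x y then v $ y else 0)"
      using x by simp
    also have "of_real (real (degree_of n E x) + W x) = (\<Sum>y<n. if E x y then of_real (\<psi> y / \<psi> x) else 0 :: complex)"
    proof -
      have "real (degree_of n E x) + W x = (\<Sum>y<n. if E x y then \<psi> y else 0) / \<psi> x"
        using eq[OF x] psi_pos[OF x] by (simp add: field_simps)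
      also have "\<dots> = (\<Sum>y<n. if E x y then \<psi> y / \<psi> x else 0)"
        by (simp add: sum_divide_distrib) (intro sum.cong refl, simp)
      finally show ?thesis by (simp add: if_distrib cong: if_cong)
    qed
    finally show ?thesis unfolding T_def
      by (simp add: sum_distrib_left sum_distrib_right sum_subtractf[symmetric] algebra_simps if_distrib cong: if_cong)
  qed
  have "ip n v (H *\<^sub>v v) = (\<Sum>x<n. \<Sum>y<n. T x y)" unfolding ip_def using row by simp
  also have "\<dots> = (\<Sum>x<n. \<Sum>y<n. (T x y + T y x) / 2)"
  proof -
    have "(\<Sum>x<n. \<Sum>y<n. T y x) = (\<Sum>x<n. \<Sum>y<n. T x y)" by (rule sum.swap)
    thus ?thesis by (simp add: sum.distrib sum_divide_distrib[symmetric] add_divide_distrib)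
  qed
  also have "\<dots> = complex_of_real (gsf v)"
    unfolding gsf_def of_real_sum
  proof (intro sum.cong refl)
    fix x y assume x: "x \<in> {..<n}" and y: "y \<in> {..<n}"
    show "(T x y + T y x) / 2 = complex_of_real (if E x y then \<psi> x * \<psi> y * (cmod (v $ x / of_real (\<psi> x) - v $ y / of_real (\<psi> y)))^2 / 2 else 0)"
    proof (cases "E x y")
      case True
      have "complex_of_real (\<psi> x * \<psi> y * (cmod (v $ x / of_real (\<psi> x) - v $ y / of_real (\<psi> y)))^2) = T x y + T y x"
      proof -
        have xn: "x < n" and yn: "y < n" using x y by auto
        show ?thesis unfolding gs_term[OF psi_pos[OF xn] psi_pos[OF yn]]
          using True sym[of x y] unfolding T_def by (simp add: algebra_simps)
      qed
      then show ?thesis using True by (simp del: of_real_power of_real_mult)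
    qed (use sym[of x y] in \<open>simp add: T_def\<close>)
  qed
  finally show ?thesis .
qed

end


lemma nsq_pos: assumes v: "v \<in> carrier_vec n" and nz: "v \<noteq> 0\<^sub>v n" shows "0 < nsq n v"
proof -
  from nz v obtain i where i: "i < n" and vi: "v $ i \<noteq> 0"
    by (metis carrier_vecD eq_vecI index_zero_vec(1) index_zero_vec(2))
  show ?thesis unfolding nsq_def
    by (rule sum_pos2[of "{..<n}" i]) (use i vi in auto)
qed

context gstate begin

lemma eigen: assumes ev: "eigenvector H v lam"
  shows "lam = complex_of_real (gsf v / nsq n v)" "0 < nsq n v" "v \<in> carrier_vec n"
proof -
  from ev have v: "v \<in> carrier_vec n" and nz: "v \<noteq> 0\<^sub>v n" and Hv: "H *\<^sub>v v = lam \<cdot>\<^sub>v v"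
    unfolding eigenvector_def using hamiltonian_carrier[of n E W] by auto
  show pos: "0 < nsq n v" by (rule nsq_pos[OF v nz])
  have "complex_of_real (gsf v) = ip n v (lam \<cdot>\<^sub>v v)" unfolding form[OF v, symmetric] Hv ..
  also have "\<dots> = lam * ip n v v" unfolding ip_def using v by (simp add: sum_distrib_left algebra_simps)
  finally have "complex_of_real (gsf v) = lam * of_real (nsq n v)" unfolding ip_self .
  thus "lam = complex_of_real (gsf v / nsq n v)" using pos by (simp add: field_simps)
  show "v \<in> carrier_vec n" by (rule v)
qed

lemma gsf_zero: assumes "gsf v = 0" "x < n" "y < n" "E x y"
  shows "v $ x / of_real (\<psi> x) = v $ y / of_real (\<psi> y)"
proof -
  have nn: "\<And>x y. x \<in> {..<n} \<Longrightarrow> y \<in> {..<n} \<Longrightarrow> 0 \<le> (if E x y then \<psi> x * \<psi> y * (cmod (v $ x / of_real (\<psi> x) - v $ y / of_real (\<psi> y)))^2 / 2 else 0)"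
    using psi_pos by (simp add: less_imp_le)
  from assms(1) have "(\<Sum>y<n. if E x y then \<psi> x * \<psi> y * (cmod (v $ x / of_real (\<psi> x) - v $ y / of_real (\<psi> y)))^2 / 2 else 0) = 0"
    unfolding gsf_def using assms(2) nn by (subst (asm) sum_nonneg_eq_0_iff) (auto intro!: sum_nonneg)
  hence "(if E x y then \<psi> x * \<psi> y * (cmod (v $ x / of_real (\<psi> x) - v $ y / of_real (\<psi> y)))^2 / 2 else 0) = 0"
    using assms(2,3) nn by (subst (asm) sum_nonneg_eq_0_iff) auto
  thus ?thesis using assms psi_pos[of x] psi_pos[of y] by simp
qed


end

context gstate begin
lemma gsf_upper: assumes K: "\<And>x. x < n \<Longrightarrow> real (degree_of n E x) + W x \<le> K"
  shows "gsf v \<le> 2 * K * nsq n v"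
proof -
  define U where "U x y = (if E x y then \<psi> y / \<psi> x * (cmod (v $ x))^2 else 0)" for x y
  have tb: "(if E x y then \<psi> x * \<psi> y * (cmod (v $ x / of_real (\<psi> x) - v $ y / of_real (\<psi> y)))^2 / 2 else 0)
      \<le> U x y + U y x" if x: "x < n" and y: "y < n" for x y
  proof (cases "E x y")
    case True
    have px: "\<psi> x > 0" and py: "\<psi> y > 0" using psi_pos x y by auto
    have "cmod (v $ x / of_real (\<psi> x) - v $ y / of_real (\<psi> y)) \<le> cmod (v $ x) / \<psi> x + cmod (v $ y) / \<psi> y"
      using norm_triangle_ineq4[of "v $ x / of_real (\<psi> x)" "v $ y / of_real (\<psi> y)"] px py
      by (simp add: norm_divide)
    hence "(cmod (v $ x / of_real (\<psi> x) - v $ y / of_real (\<psi> y)))^2 \<le> (cmod (v $ x) / \<psi> x + cmod (v $ y) / \<psi> y)^2"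
      by (intro power_mono) auto
    also have "\<dots> \<le> 2 * (cmod (v $ x) / \<psi> x)^2 + 2 * (cmod (v $ y) / \<psi> y)^2"
      using sum_squares_bound[of "cmod (v $ x) / \<psi> x" "cmod (v $ y) / \<psi> y"] by (simp add: power2_sum)
    finally have "\<psi> x * \<psi> y * (cmod (v $ x / of_real (\<psi> x) - v $ y / of_real (\<psi> y)))^2 / 2
       \<le> \<psi> x * \<psi> y * (2 * (cmod (v $ x) / \<psi> x)^2 + 2 * (cmod (v $ y) / \<psi> y)^2) / 2"
      using px py by (intro divide_right_mono mult_left_mono) auto
    also have "\<dots> = U x y + U y x"
    proof -
      have "\<psi> x * \<psi> y * (2 * (cmod (v $ x) / \<psi> x)^2 + 2 * (cmod (v $ y) / \<psi> y)^2) / 2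
          = \<psi> y / \<psi> x * (cmod (v $ x))^2 + \<psi> x / \<psi> y * (cmod (v $ y))^2"
        using px py by (simp add: power2_eq_square field_simps)
      thus ?thesis unfolding U_def using True sym[of x y] by simp
    qed
    finally show ?thesis using True by simp
  qed (simp add: U_def sym[of x y])
  have "gsf v \<le> (\<Sum>x<n. \<Sum>y<n. U x y + U y x)" unfolding gsf_def
    using tb by (intro sum_mono) auto
  also have "\<dots> = 2 * (\<Sum>x<n. \<Sum>y<n. U x y)"
    using sum.swap[of U "{..<n}" "{..<n}"] by (simp add: sum.distrib)
  also have "(\<Sum>x<n. \<Sum>y<n. U x y) = (\<Sum>x<n. (real (degree_of n E x) + W x) * (cmod (v $ x))^2)"
  proof (intro sum.cong refl)
    fix x assume "x \<in> {..<n}"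
    hence x: "x < n" by simp
    have "(\<Sum>y<n. U x y) = (\<Sum>y<n. if E x y then \<psi> y else 0) / \<psi> x * (cmod (v $ x))^2"
      unfolding U_def by (simp add: sum_divide_distrib sum_distrib_right) (intro sum.cong refl, simp)
    also have "\<dots> = (real (degree_of n E x) + W x) * (cmod (v $ x))^2"
      unfolding eq[OF x, symmetric] using psi_pos[OF x] by simp
    finally show "(\<Sum>y<n. U x y) = (real (degree_of n E x) + W x) * (cmod (v $ x))^2" .
  qed
  also have "(\<Sum>x<n. (real (degree_of n E x) + W x) * (cmod (v $ x))^2) \<le> (\<Sum>x<n. K * (cmod (v $ x))^2)"
    using K by (intro sum_mono mult_right_mono) auto
  finally show ?thesis unfolding nsq_def by (simp add: sum_distrib_left mult.assoc)
qed

end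

context gstate begin

lemma Hsum: "v \<in> carrier_vec n \<Longrightarrow> i < n \<Longrightarrow> (H *\<^sub>v v) $ i = (\<Sum>j<n. complex_of_real (hr n E W i j) * v $ j)"
  by (subst mult_mat_vec_sum[OF hamiltonian_carrier]) (auto simp: hamiltonian_index intro!: sum.cong)

lemma hr_sym: "hr n E W i j = hr n E W j i"
  unfolding hr_def using sym[of i j] by auto

lemma hr_psi: assumes x: "x < n" shows "(\<Sum>i<n. hr n E W x i * \<psi> i) = 0"
proof -
  have "(\<Sum>i<n. hr n E W x i * \<psi> i) = (\<Sum>i<n. (if x = i then (real (degree_of n E x) + W x) * \<psi> i else 0) - (if E x i then \<psi> i else 0))"
    by (intro sum.cong refl) (simp add: hr_def algebra_simps)
  also have "\<dots> = (real (degree_of n E x) + W x) * \<psi> x - (\<Sum>i<n. if E x i then \<psi> i else 0)"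
    unfolding sum_subtractf using x by simp
  also have "\<dots> = 0" using eq[OF x] by simp
  finally show ?thesis .
qed

lemma psi_H: assumes v: "v \<in> carrier_vec n" shows "(\<Sum>i<n. complex_of_real (\<psi> i) * (H *\<^sub>v v) $ i) = 0"
proof -
  have "(\<Sum>i<n. complex_of_real (\<psi> i) * (H *\<^sub>v v) $ i) = (\<Sum>i<n. \<Sum>j<n. complex_of_real (\<psi> i * hr n E W i j) * v $ j)"
    using v by (intro sum.cong refl) (simp add: Hsum sum_distrib_left mult.assoc)
  also have "\<dots> = (\<Sum>j<n. \<Sum>i<n. complex_of_real (\<psi> i * hr n E W i j) * v $ j)" by (rule sum.swap)
  also have "\<dots> = (\<Sum>j<n. complex_of_real (\<Sum>i<n. hr n E W j i * \<psi> i) * v $ j)"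
  proof (intro sum.cong refl)
    fix j assume "j \<in> {..<n}"
    have "(\<Sum>i<n. hr n E W j i * \<psi> i) = (\<Sum>i<n. \<psi> i * hr n E W i j)"
      by (intro sum.cong refl) (simp add: hr_sym[of j] mult.commute)
    thus "(\<Sum>i<n. complex_of_real (\<psi> i * hr n E W i j) * v $ j) = complex_of_real (\<Sum>i<n. hr n E W j i * \<psi> i) * v $ j"
      by (simp add: of_real_sum sum_distrib_right del: of_real_mult)
  qed
  also have "\<dots> = 0" by (simp add: hr_psi)
  finally show ?thesis .
qed

lemma kernel:
  assumes conn: "\<And>f :: nat \<Rightarrow> complex. (\<And>x y. x < n \<Longrightarrow> y < n \<Longrightarrow> E x y \<Longrightarrow> f x = f y) \<Longrightarrow> (\<And>x. x < n \<Longrightarrow> f x = f 0)"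
  and v: "gsf v = 0" and x: "x < n"
  shows "v $ x = (v $ 0 / of_real (\<psi> 0)) * of_real (\<psi> x)"
proof -
  have "v $ x / of_real (\<psi> x) = v $ 0 / of_real (\<psi> 0)"
    by (rule conn[of "\<lambda>x. v $ x / of_real (\<psi> x)", OF gsf_zero[OF v] x])
  thus ?thesis using psi_pos[OF x] by (simp add: field_simps)
qed

end


context gstate begin

lemma exists_small_eig:
  assumes conn: "\<And>f :: nat \<Rightarrow> complex. (\<And>x y. x < n \<Longrightarrow> y < n \<Longrightarrow> E x y \<Longrightarrow> f x = f y) \<Longrightarrow> (\<And>x. x < n \<Longrightarrow> f x = f 0)"
  and n0: "0 < n"
  and K: "\<And>x. x < n \<Longrightarrow> real (degree_of n E x) + W x \<le> K" and K0: "0 \<le> K"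
  and phi: "\<phi> \<in> carrier_vec n" and orth: "(\<Sum>i<n. complex_of_real (\<psi> i) * \<phi> $ i) = 0"
  and phipos: "0 < nsq n \<phi>" and small: "gsf \<phi> < b * nsq n \<phi>"
  shows "\<exists>lam. eigenvalue H lam \<and> lam \<noteq> 0 \<and> Re lam < b"
proof (rule ccontr)
  assume "\<not> ?thesis"
  hence big: "\<And>lam. eigenvalue H lam \<Longrightarrow> lam \<noteq> 0 \<Longrightarrow> b \<le> Re lam" by force
  have b0: "0 < b" using small gsf_nonneg[of \<phi>] phipos
    by (metis less_le_trans mult_le_0_iff not_le order.asym)
  define R where "R = gsf \<phi> / nsq n \<phi>"
  have R0: "0 \<le> R" unfolding R_def using gsf_nonneg phipos by simp
  have Rb: "R < b" unfolding R_def using small phipos by (simp add: divide_less_eq)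
  define c where "c = 2 * K + b"
  have c0: "0 < c" and bc: "b \<le> c" unfolding c_def using K0 b0 by auto
  define q where "q = 1 - (R + b) / (2 * c)"
  have q0: "0 < q" unfolding q_def using c0 bc Rb R0 by (simp add: field_simps)
  define \<rho> where "\<rho> = (1 - R / c) / q"
  have "q < 1 - R / c" unfolding q_def using c0 Rb by (simp add: field_simps)
  hence rho1: "1 < \<rho>" unfolding \<rho>_def using q0 by (simp add: less_divide_eq)
  define np where "np = (\<Sum>i<n. (\<psi> i)^2)"
  have np0: "0 < np" unfolding np_def using psi_pos[OF n0] n0 by (intro sum_pos2[of _ 0]) auto
  define N where "N = mat n n (\<lambda>(i,j). ((if i = j then 1 else 0) - H $$ (i,j) / of_real c - complex_of_real (\<psi> i * \<psi> j / np)) / of_real q)"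
  have Nc: "N \<in> carrier_mat n n" unfolding N_def by simp
  have Nherm: "N $$ (i,j) = cnj (N $$ (j,i))" if "i < n" "j < n" for i j
    using that herm[of i j] unfolding N_def by (simp add: mult.commute)
  have Nsum: "(N *\<^sub>v v) $ i = (v $ i - (H *\<^sub>v v) $ i / of_real c - complex_of_real (\<psi> i / np) * (\<Sum>j<n. complex_of_real (\<psi> j) * v $ j)) / of_real q"
    if v: "v \<in> carrier_vec n" and i: "i < n" for v i
  proof -
    have "(N *\<^sub>v v) $ i = (\<Sum>j<n. ((if i = j then v $ j else 0) - H $$ (i,j) * v $ j / of_real c - complex_of_real (\<psi> i / np) * (complex_of_real (\<psi> j) * v $ j)) / of_real q)"
      unfolding mult_mat_vec_sum[OF Nc v i] using i unfolding N_def by (intro sum.cong refl) (auto simp: field_simps)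
    also have "\<dots> = ((\<Sum>j<n. (if i = j then v $ j else 0)) - (\<Sum>j<n. H $$ (i,j) * v $ j) / of_real c - complex_of_real (\<psi> i / np) * (\<Sum>j<n. complex_of_real (\<psi> j) * v $ j)) / of_real q"
      by (simp add: sum_divide_distrib[symmetric] sum_subtractf sum_distrib_left)
    also have "\<dots> = (v $ i - (H *\<^sub>v v) $ i / of_real c - complex_of_real (\<psi> i / np) * (\<Sum>j<n. complex_of_real (\<psi> j) * v $ j)) / of_real q"
      using i by (simp add: mult_mat_vec_sum[OF hamiltonian_carrier v i])
    finally show ?thesis .
  qed
  have ray: "\<rho> * nsq n \<phi> \<le> Re (ip n \<phi> (N *\<^sub>v \<phi>))"
  proof -
    have "ip n \<phi> (N *\<^sub>v \<phi>) = (\<Sum>i<n. cnj (\<phi> $ i) * ((\<phi> $ i - (H *\<^sub>v \<phi>) $ i / of_real c) / of_real q))"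
      unfolding ip_def by (intro sum.cong refl) (simp add: Nsum[OF phi] orth)
    also have "\<dots> = (\<Sum>i<n. cnj (\<phi> $ i) * \<phi> $ i / of_real q - cnj (\<phi> $ i) * (H *\<^sub>v \<phi>) $ i / (of_real c * of_real q))"
      using c0 q0 by (intro sum.cong refl) (simp add: field_simps)
    also have "\<dots> = (ip n \<phi> \<phi> - ip n \<phi> (H *\<^sub>v \<phi>) / of_real c) / of_real q"
      unfolding ip_def sum_subtractf sum_divide_distrib[symmetric] using c0 q0 by (simp add: field_simps)
    also have "\<dots> = complex_of_real ((nsq n \<phi> - gsf \<phi> / c) / q)"
      unfolding ip_self form[OF phi] by simp
    also have "(nsq n \<phi> - gsf \<phi> / c) / q = \<rho> * nsq n \<phi>"
      unfolding \<rho>_def R_def using phipos c0 q0 by (simp add: field_simps)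
    finally show ?thesis by simp
  qed
  have evN: "cmod nu < 1" if ev: "eigenvalue N nu" for nu
  proof -
    from ev obtain v where ev': "eigenvector N v nu" unfolding eigenvalue_def by auto
    hence v: "v \<in> carrier_vec n" and vnz: "v \<noteq> 0\<^sub>v n" and Nv: "N *\<^sub>v v = nu \<cdot>\<^sub>v v"
      unfolding eigenvector_def using Nc by auto
    define \<alpha> where "\<alpha> = (\<Sum>j<n. complex_of_real (\<psi> j) * v $ j)"
    have comp: "of_real q * nu * v $ i = v $ i - (H *\<^sub>v v) $ i / of_real c - complex_of_real (\<psi> i / np) * \<alpha>"
      if i: "i < n" for i
    proof -
      have "(N *\<^sub>v v) $ i = nu * v $ i" using Nv i v by simp
      thus ?thesis unfolding Nsum[OF v i] \<alpha>_def using q0 by (simp add: field_simps)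
    qed
    have "of_real q * nu * \<alpha> = (\<Sum>i<n. complex_of_real (\<psi> i) * (of_real q * nu * v $ i))"
      unfolding \<alpha>_def by (simp add: sum_distrib_left algebra_simps)
    also have "\<dots> = (\<Sum>i<n. complex_of_real (\<psi> i) * v $ i - complex_of_real (\<psi> i) * (H *\<^sub>v v) $ i / of_real c
                      - complex_of_real ((\<psi> i)^2 / np) * \<alpha>)"
      by (intro sum.cong refl) (simp only: lessThan_iff comp, simp add: algebra_simps power2_eq_square)
    also have "\<dots> = \<alpha> - (\<Sum>i<n. complex_of_real (\<psi> i) * (H *\<^sub>v v) $ i) / of_real c - complex_of_real (np / np) * \<alpha>"
    proof -
      have s1: "(\<Sum>i<n. complex_of_real (\<psi> i) * (H *\<^sub>v v) $ i / of_real c) = (\<Sum>i<n. complex_of_real (\<psi> i) * (H *\<^sub>v v) $ i) / of_real c"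
        by (rule sum_divide_distrib[symmetric])
      have s2: "(\<Sum>i<n. complex_of_real ((\<psi> i)^2 / np) * \<alpha>) = complex_of_real (np / np) * \<alpha>"
        unfolding sum_distrib_right[symmetric] of_real_sum[symmetric] sum_divide_distrib[symmetric] np_def ..
      show ?thesis unfolding sum_subtractf s1 s2 by (simp add: \<alpha>_def)
    qed
    also have "\<dots> = 0" using np0 psi_H[OF v] by simp
    finally have "of_real q * nu * \<alpha> = 0" .
    hence cases: "nu = 0 \<or> \<alpha> = 0" using q0 by simp
    show ?thesis
    proof (cases "nu = 0")
      case True then show ?thesis by simp
    next
      case False
      with cases have a0: "\<alpha> = 0" by simp
      define lam where "lam = of_real c * (1 - of_real q * nu)"
      have Hv: "H *\<^sub>v v = lam \<cdot>\<^sub>v v"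
      proof (rule eq_vecI)
        fix i assume "i < dim_vec (lam \<cdot>\<^sub>v v)"
        hence i: "i < n" using v by simp
        from comp[OF i] a0 have "(H *\<^sub>v v) $ i / of_real c = v $ i - of_real q * nu * v $ i"
          by (simp add: algebra_simps)
        hence "(H *\<^sub>v v) $ i = of_real c * (v $ i - of_real q * nu * v $ i)"
          using c0 by (simp add: divide_eq_eq mult.commute)
        thus "(H *\<^sub>v v) $ i = (lam \<cdot>\<^sub>v v) $ i" using i v unfolding lam_def by (simp add: algebra_simps)
      qed (use v hamiltonian_carrier[of n E W] in auto)
      have evH: "eigenvector H v lam" unfolding eigenvector_def using v vnz Hv hamiltonian_carrier[of n E W] by auto
      note e = eigen[OF evH]
      define t where "t = gsf v / nsq n v"
      have lt: "lam = complex_of_real t" unfolding t_def by (rule e(1))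
      have t2K: "t \<le> 2 * K" unfolding t_def using gsf_upper[OF K, of v] e(2) by (simp add: divide_le_eq)
      have lnz: "lam \<noteq> 0"
      proof
        assume "lam = 0"
        hence "gsf v = 0" using lt e(2) unfolding t_def by simp
        hence vx: "v $ x = (v $ 0 / of_real (\<psi> 0)) * of_real (\<psi> x)" if "x < n" for x
          using kernel[OF conn] that by blast
        define a where "a = v $ 0 / of_real (\<psi> 0)"
        have vx': "v $ x = a * of_real (\<psi> x)" if "x < n" for x unfolding a_def by (rule vx[OF that])
        have "\<alpha> = a * complex_of_real np"
          unfolding \<alpha>_def np_def of_real_sum sum_distrib_left
        proof (intro sum.cong refl)
          fix x assume "x \<in> {..<n}"
          hence x: "x < n" by simp
          show "complex_of_real (\<psi> x) * v $ x = a * complex_of_real ((\<psi> x)^2)"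
            unfolding vx'[OF x] by (simp add: power2_eq_square)
        qed
        with a0 np0 have a00: "a = 0" by simp
        have "v = 0\<^sub>v n"
        proof (rule eq_vecI)
          fix i assume "i < dim_vec (0\<^sub>v n :: complex vec)"
          hence i: "i < n" by simp
          show "v $ i = 0\<^sub>v n $ i" unfolding vx'[OF i] a00 using i by simp
        qed (use v in simp)
        with vnz show False by simp
      qed
      have bt: "b \<le> t" using big[OF _ lnz] evH lt unfolding eigenvalue_def by force
      have "of_real c * (1 - of_real q * nu) = complex_of_real t" using lt unfolding lam_def .
      hence "1 - of_real q * nu = complex_of_real t / of_real c" using c0 by (simp add: eq_divide_eq mult.commute)
      hence "of_real q * nu = 1 - complex_of_real t / of_real c" by (simp add: algebra_simps)
      hence "nu = (1 - complex_of_real t / of_real c) / of_real q" using q0 by (simp add: eq_divide_eq mult.commute)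
      hence nu_eq: "nu = complex_of_real ((1 - t / c) / q)" by simp
      have "(R + b) / (2 * c) < t / c" using bt Rb c0 by (simp add: divide_less_eq)
      hence l1: "1 - t / c < q" unfolding q_def by simp
      have "t / c < 1" using t2K b0 c0 unfolding c_def by (simp add: divide_less_eq)
      hence l2: "0 < 1 - t / c" by simp
      note l1 l2
      hence "\<bar>(1 - t / c) / q\<bar> < 1" using q0 by simp
      thus ?thesis unfolding nu_eq norm_of_real .
    qed
  qed
  have sr: "spectral_radius N < 1"
  proof -
    from spectral_radius_mem_max(1)[OF Nc n0] obtain nu where
      "spectral_radius N = cmod nu" "nu \<in> spectrum N" by auto
    thus ?thesis using evN unfolding spectrum_def by auto
  qed
  show False by (rule power_contra[OF Nc Nherm phi phipos ray rho1 sr])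
qed

end


lemma gap_from_eigs:
  fixes A :: "complex mat" and lam :: complex and b :: real
  assumes A: "A \<in> carrier_mat n n"
  and nonneg: "\<And>z. eigenvalue A z \<Longrightarrow> 0 \<le> Re z"
  and zero: "eigenvalue A 0"
  and lam: "eigenvalue A lam" "0 < Re lam" "Re lam < b"
  shows "spectral_gap A < b"
proof -
  define p where "p = char_poly A"
  have p0: "p \<noteq> 0" using degree_monic_char_poly[OF A] unfolding p_def by auto
  define xs where "xs = sorted_eigenvalues A"
  have setxs: "set xs = Re ` {x. poly p x = 0}"
    unfolding xs_def sorted_eigenvalues_def p_def[symmetric] using p0 by simp
  have sorted: "sorted xs" unfolding xs_def sorted_eigenvalues_def by simp
  have ge0: "0 \<le> y" if "y \<in> set xs" for y
    using that nonneg unfolding setxs eigenvalue_root_char_poly[OF A, symmetric] p_def by auto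
  have "0 \<in> set xs" unfolding setxs using zero eigenvalue_root_char_poly[OF A] p_def by force
  then obtain k0 where k0: "k0 < length xs" "xs ! k0 = 0" by (auto simp: in_set_conv_nth)
  have x0: "xs ! 0 = 0"
  proof -
    have "xs ! 0 \<le> xs ! k0" using sorted k0 by (intro sorted_nth_mono) auto
    moreover have "0 \<le> xs ! 0" using k0 by (intro ge0 nth_mem) auto
    ultimately show ?thesis using k0 by simp
  qed
  have "Re lam \<in> set xs" unfolding setxs using lam(1) eigenvalue_root_char_poly[OF A] p_def by force
  then obtain k where k: "k < length xs" "xs ! k = Re lam" by (auto simp: in_set_conv_nth)
  have "k \<noteq> 0" using k x0 lam(2) by (metis less_irrefl)
  hence "xs ! 1 \<le> xs ! k" using sorted k by (intro sorted_nth_mono) auto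
  thus ?thesis unfolding spectral_gap_def xs_def[symmetric] using x0 k lam(3) by simp
qed


lemma cat_sym: "cat_adj l x y = cat_adj l y x"
  unfolding cat_adj_def by auto

lemma par_eq: assumes y: "2 * l < y"
  shows "cat_par l y = x \<longleftrightarrow> (1 \<le> x \<and> (y = 2 * l + 2 * x - 1 \<or> y = 2 * l + 2 * x))"
proof -
  define t where "t = y - (2 * l + 1)"
  have y': "y = 2 * l + 1 + t" unfolding t_def using y by simp
  have dm: "t = 2 * (t div 2) + t mod 2" by simp
  have m: "t mod 2 = 0 \<or> t mod 2 = 1" by auto
  show ?thesis unfolding cat_par_def t_def[symmetric]
  proof
    assume "t div 2 + 1 = x"
    thus "1 \<le> x \<and> (y = 2 * l + 2 * x - 1 \<or> y = 2 * l + 2 * x)" using dm m y' by auto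
  next
    assume "1 \<le> x \<and> (y = 2 * l + 2 * x - 1 \<or> y = 2 * l + 2 * x)"
    hence "t = 2 * (x - 1) \<or> t = 2 * (x - 1) + 1" using y' by auto
    thus "t div 2 + 1 = x" using \<open>1 \<le> x \<and> _\<close> by auto
  qed
qed

lemma cat_irr: "\<not> cat_adj l x x"
proof
  assume "cat_adj l x x"
  hence "2 * l < x" "x < cat_n l" "cat_par l x = x" unfolding cat_adj_def by auto
  with par_eq[of l x x] show False unfolding cat_n_def by auto
qed

lemma par_range: assumes "2 \<le> l" "2 * l < v" "v < cat_n l"
  shows "1 \<le> cat_par l v" "cat_par l v \<le> 2 * l - 1"
  using assms unfolding cat_par_def cat_n_def by auto

lemma nbr_pend: assumes l: "2 \<le> l" and v: "2 * l < v" "v < cat_n l"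
  shows "{y. y < cat_n l \<and> cat_adj l v y} = {cat_par l v}"
proof -
  have "cat_par l v < cat_n l" using par_range[OF assms] l unfolding cat_n_def by simp
  moreover have "\<not> (2 * l < y \<and> y < cat_n l \<and> v = cat_par l y)" for y using par_range[OF l, of y] v by auto
  ultimately show ?thesis using v unfolding cat_adj_def by auto
qed

lemma adj_spine: assumes x: "1 \<le> x" "x \<le> 2 * l"
  shows "cat_adj l x y \<longleftrightarrow> (y \<le> 2 * l \<and> (x = y + 1 \<or> y = x + 1)) \<or> (2 * l < y \<and> y < cat_n l \<and> (y = 2 * l + 2 * x - 1 \<or> y = 2 * l + 2 * x))"
  using par_eq[of l y x] x unfolding cat_adj_def by auto

lemma adj_0: assumes "1 \<le> l" shows "cat_adj l 0 y \<longleftrightarrow> y = 1"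
  using par_eq[of l y 0] assms unfolding cat_adj_def cat_n_def by auto

lemma nbr_0: assumes l: "2 \<le> l"
  shows "{y. y < cat_n l \<and> cat_adj l 0 y} = {1}"
proof (rule Set.set_eqI)
  fix y
  have a: "cat_adj l 0 y \<longleftrightarrow> y = 1" by (rule adj_0) (use l in simp)
  have "1 < cat_n l" using l unfolding cat_n_def by simp
  thus "y \<in> {y. y < cat_n l \<and> cat_adj l 0 y} \<longleftrightarrow> y \<in> {1}" using a by blast
qed

lemma nbr_2l: assumes l: "2 \<le> l"
  shows "{y. y < cat_n l \<and> cat_adj l (2 * l) y} = {2 * l - 1}"
proof -
  have "cat_adj l (2 * l) y \<longleftrightarrow> y = 2 * l - 1" for y
  proof -
    have "cat_adj l (2 * l) y \<longleftrightarrow> (y \<le> 2 * l \<and> (2 * l = y + 1 \<or> y = 2 * l + 1)) \<or> (2 * l < y \<and> y < cat_n l \<and> (y = 2 * l + 2 * (2 * l) - 1 \<or> y = 2 * l + 2 * (2 * l)))"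
      by (rule adj_spine) (use l in auto)
    thus ?thesis using l unfolding cat_n_def by auto
  qed
  thus ?thesis using l unfolding cat_n_def by auto
qed

lemma nbr_mid: assumes l: "2 \<le> l" and x: "1 \<le> x" "x \<le> 2 * l - 1"
  shows "{y. y < cat_n l \<and> cat_adj l x y} = {x - 1, x + 1, 2 * l + 2 * x - 1, 2 * l + 2 * x}"
proof -
  have "y < cat_n l \<and> cat_adj l x y \<longleftrightarrow> y \<in> {x - 1, x + 1, 2 * l + 2 * x - 1, 2 * l + 2 * x}" for y
  proof -
    have a: "cat_adj l x y \<longleftrightarrow> (y \<le> 2 * l \<and> (x = y + 1 \<or> y = x + 1)) \<or> (2 * l < y \<and> y < cat_n l \<and> (y = 2 * l + 2 * x - 1 \<or> y = 2 * l + 2 * x))"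
      by (rule adj_spine) (use x l in auto)
    show ?thesis unfolding a using x l unfolding cat_n_def by auto
  qed
  thus ?thesis by auto
qed

definition WB :: "nat \<Rightarrow> nat \<Rightarrow> real" where
  "WB l j = (if j = 0 then 0 else - 1/2 - real j / (4 * real l))"
definition WC :: "nat \<Rightarrow> nat \<Rightarrow> real" where
  "WC l j = (if j = l then 7 else if j = 1 then 1 / (11/12 - 1 / (8 * real l)) - 1
             else 1 / (2/3 - real j / (8 * real l)) - 1)"
definition PS :: "nat \<Rightarrow> real" where
  "PS j = (if j = 0 then 1 else (2/3) ^ (j - 1))"
definition rC :: "nat \<Rightarrow> nat \<Rightarrow> real" where
  "rC l j = 1 / (1 + WC l j)"
definition cpsi :: "nat \<Rightarrow> nat \<Rightarrow> real" where
  "cpsi l v = (if v \<le> 2 * l then PS (cat_level l v)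
      else PS (cat_level l (cat_par l v)) * rC l (cat_level l (cat_par l v)))"

lemma cat_W_sp: "v \<le> 2 * l \<Longrightarrow> cat_W l v = WB l (cat_level l v)"
  unfolding cat_W_def WB_def Let_def by simp

lemma cat_W_pd: "\<not> v \<le> 2 * l \<Longrightarrow> cat_W l v = WC l (cat_level l (cat_par l v))"
  unfolding cat_W_def WC_def Let_def by simp

lemma PS_pos: "0 < PS j" unfolding PS_def by simp

lemma WC_facts: assumes l: "2 \<le> l" and j: "1 \<le> j" "j \<le> l"
  shows "0 < WC l j" "WC l j \<le> 7" "rC l j = (if j = l then 1/8 else if j = 1 then 11/12 - 1 / (8 * real l) else 2/3 - real j / (8 * real l))"
proof -
  have l0: "(2::real) \<le> real l" using l by simp
  have A: "0 < 11/12 - 1 / (8 * real l)" "11/12 - 1 / (8 * real l) < 1"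
    using l0 by (simp_all add: field_simps)
  have B: "j \<noteq> l \<Longrightarrow> 13/24 \<le> 2/3 - real j / (8 * real l)" "2/3 - real j / (8 * real l) < 1"
    using l0 j by (simp_all add: field_simps)
  show "0 < WC l j"
  proof -
    { assume "j \<noteq> l" "j = 1"
      hence ?thesis unfolding WC_def using A by (simp add: field_simps) }
    moreover
    { assume "j \<noteq> l" "j \<noteq> 1"
      moreover have "1 < 1 / (2/3 - real j / (8 * real l))"
        using B \<open>j \<noteq> l\<close> by (subst less_divide_eq_1_pos) auto
      ultimately have ?thesis unfolding WC_def by simp }
    ultimately show ?thesis unfolding WC_def by fastforce
  qed
  show "WC l j \<le> 7"
  proof -
    have "1 / (11/12 - 1 / (8 * real l)) \<le> 2"
      using A l0 by (simp add: field_simps)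
    moreover have "j \<noteq> l \<Longrightarrow> 1 / (2/3 - real j / (8 * real l)) \<le> 2"
      using B l0 by (simp add: field_simps)
    ultimately show ?thesis unfolding WC_def by auto
  qed
  show "rC l j = (if j = l then 1/8 else if j = 1 then 11/12 - 1 / (8 * real l) else 2/3 - real j / (8 * real l))"
    unfolding rC_def WC_def using A B by auto
qed

lemma core_mid: assumes l: "2 \<le> l" and j: "1 \<le> j" "j + 1 \<le> l"
  shows "(4 + WB l j) * PS j = PS (j - 1) + PS (j + 1) + 2 * PS j * rC l j"
proof -
  have rc: "rC l j = (if j = 1 then 11/12 - 1 / (8 * real l) else 2/3 - real j / (8 * real l))"
    using WC_facts(3)[OF l j(1)] j by auto
  have l0: "0 < real l" using l by simp
  show ?thesis
  proof (cases "j = 1")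
    case True
    then show ?thesis unfolding rc WB_def PS_def using l0 by (simp add: field_simps)
  next
    case False
    define m where "m = j - 2"
    have m: "j = m + 2" unfolding m_def using j False by simp
    have h1: "PS (j - 1) = (2/3)^m" and h2: "PS j = (2/3)^m * (2/3)" and h3: "PS (j+1) = (2/3)^m * (4/9)"
      unfolding PS_def m by (simp_all add: power_add)
    have jm: "real j = real m + 2" unfolding m by simp
    have wb: "WB l j = - 1/2 - (real m + 2) / (4 * real l)" unfolding WB_def m by simp
    show ?thesis unfolding h1 h2 h3 rc wb using False l0 by (simp add: field_simps jm)
  qed
qed

lemma core_l: assumes l: "2 \<le> l"
  shows "(4 + WB l l) * PS l = 2 * PS (l - 1) + 2 * PS l * rC l l"
proof -
  have rc: "rC l l = 1/8" using WC_facts(3)[OF l _ order_refl] l by auto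
  define m where "m = l - 2"
  have m: "l = m + 2" unfolding m_def using l by simp
  have h1: "PS (l - 1) = (2/3)^m" and h2: "PS l = (2/3)^m * (2/3)"
    unfolding PS_def m by (simp_all add: power_add)
  have l0: "0 < real l" using l by simp
  show ?thesis unfolding h1 h2 rc WB_def using l0 by (simp add: field_simps)
qed


lemma sum_nbr: fixes n :: nat shows "(\<Sum>y<n. if P y then f y else 0) = sum f {y. y < n \<and> P y}"
proof -
  have "sum f {y \<in> {..<n}. P y} = (\<Sum>y<n. if P y then f y else 0)" by (rule sum.inter_filter) simp
  moreover have "{y \<in> {..<n}. P y} = {y. y < n \<and> P y}" by auto
  ultimately show ?thesis by simp
qed

lemma lev_range: assumes "1 \<le> p" "p \<le> 2 * l - 1"
  shows "1 \<le> cat_level l p" "cat_level l p \<le> l"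
  using assms unfolding cat_level_def by auto

lemma cpsi_pend: assumes l: "2 \<le> l" and v: "2 * l < v" "v < cat_n l"
  shows "cpsi l v = PS (cat_level l (cat_par l v)) * rC l (cat_level l (cat_par l v))"
    "0 < rC l (cat_level l (cat_par l v))"
    "(1 + cat_W l v) * cpsi l v = cpsi l (cat_par l v)"
proof -
  note pr = par_range[OF l v]
  note lr = lev_range[OF pr]
  show c: "cpsi l v = PS (cat_level l (cat_par l v)) * rC l (cat_level l (cat_par l v))"
    unfolding cpsi_def using v by simp
  have wpos: "0 < WC l (cat_level l (cat_par l v))" by (rule WC_facts(1)[OF l lr])
  show "0 < rC l (cat_level l (cat_par l v))" unfolding rC_def using wpos by simp
  have "cpsi l (cat_par l v) = PS (cat_level l (cat_par l v))"
  proof -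
    have "cat_par l v \<le> 2 * l" using pr(2) by linarith
    thus ?thesis unfolding cpsi_def by simp
  qed
  moreover have w: "cat_W l v = WC l (cat_level l (cat_par l v))" by (rule cat_W_pd) (use v in simp)
  ultimately show "(1 + cat_W l v) * cpsi l v = cpsi l (cat_par l v)"
    unfolding c w using wpos unfolding rC_def by (simp add: field_simps)
qed

lemma cpsi_pos: assumes l: "2 \<le> l" and x: "x < cat_n l" shows "0 < cpsi l x"
proof (cases "x \<le> 2 * l")
  case True then show ?thesis unfolding cpsi_def by (simp add: PS_pos)
next
  case False
  hence v: "2 * l < x" by simp
  show ?thesis unfolding cpsi_pend(1)[OF l v x] using cpsi_pend(2)[OF l v x] PS_pos by simp
qed

lemma cat_eq: assumes l: "2 \<le> l" and x: "x < cat_n l"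
  shows "(real (degree_of (cat_n l) (cat_adj l) x) + cat_W l x) * cpsi l x
       = (\<Sum>y<cat_n l. if cat_adj l x y then cpsi l y else 0)"
proof -
  have S: "(\<Sum>y<cat_n l. if cat_adj l x y then cpsi l y else 0) = sum (cpsi l) {y. y < cat_n l \<and> cat_adj l x y}"
    by (rule sum_nbr)
  have D: "degree_of (cat_n l) (cat_adj l) x = card {y. y < cat_n l \<and> cat_adj l x y}"
    unfolding degree_of_def ..
  consider (z) "x = 0" | (t) "x = 2 * l" | (m) "1 \<le> x" "x \<le> 2 * l - 1" | (p) "2 * l < x"
    by linarith
  then show ?thesis
  proof cases
    case z
    have "cat_level l 0 = 0" "cat_level l 1 = 1" unfolding cat_level_def using l by auto
    then show ?thesis unfolding S D unfolding z nbr_0[OF l] using cat_W_sp[of 0 l] l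
      by (simp add: cpsi_def WB_def PS_def)
  next
    case t
    have "cat_level l (2 * l) = 0" "cat_level l (2 * l - 1) = 1" unfolding cat_level_def using l by auto
    then show ?thesis unfolding S D unfolding t nbr_2l[OF l] using cat_W_sp[of "2 * l" l] l
      by (simp add: cpsi_def WB_def PS_def)
  next
    case p
    have "{y. y < cat_n l \<and> cat_adj l x y} = {cat_par l x}" by (rule nbr_pend[OF l p x])
    then show ?thesis unfolding S D using cpsi_pend(3)[OF l p x] by simp
  next
    case m
    define j where "j = cat_level l x"
    have N: "{y. y < cat_n l \<and> cat_adj l x y} = {x - 1, x + 1, 2 * l + 2 * x - 1, 2 * l + 2 * x}"
      by (rule nbr_mid[OF l m])
    have dist: "x - 1 \<noteq> x + 1" "x - 1 \<noteq> 2 * l + 2 * x - 1" "x - 1 \<noteq> 2 * l + 2 * x"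
      "x + 1 \<noteq> 2 * l + 2 * x - 1" "x + 1 \<noteq> 2 * l + 2 * x" "2 * l + 2 * x - 1 \<noteq> 2 * l + 2 * x"
      using m l by auto
    have card4: "card {x - 1, x + 1, 2 * l + 2 * x - 1, 2 * l + 2 * x} = 4" using dist by simp
    have pend: "cpsi l y = PS j * rC l j" if "y = 2 * l + 2 * x - 1 \<or> y = 2 * l + 2 * x" for y
    proof -
      have y: "2 * l < y" "y < cat_n l" using that m l unfolding cat_n_def by auto
      have "cat_par l y = x" using par_eq[OF y(1), of x] that m by auto
      thus ?thesis unfolding cpsi_pend(1)[OF l y] j_def by simp
    qed
    have sum4: "sum (cpsi l) {x - 1, x + 1, 2 * l + 2 * x - 1, 2 * l + 2 * x}
        = PS (cat_level l (x - 1)) + PS (cat_level l (x + 1)) + 2 * (PS j * rC l j)"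
    proof -
      have a1: "x - 1 \<le> 2 * l" "x + 1 \<le> 2 * l" using m by linarith+
      have "sum (cpsi l) {x - 1, x + 1, 2 * l + 2 * x - 1, 2 * l + 2 * x}
          = cpsi l (x - 1) + cpsi l (x + 1) + cpsi l (2 * l + 2 * x - 1) + cpsi l (2 * l + 2 * x)"
        using dist by simp
      also have "cpsi l (x - 1) = PS (cat_level l (x - 1))" unfolding cpsi_def using a1 by simp
      also have "cpsi l (x + 1) = PS (cat_level l (x + 1))" unfolding cpsi_def using a1 by simp
      also have "cpsi l (2 * l + 2 * x - 1) = PS j * rC l j" by (rule pend) simp
      also have "cpsi l (2 * l + 2 * x) = PS j * rC l j" by (rule pend) simp
      finally show ?thesis by simp
    qed
    have lhs: "(real (degree_of (cat_n l) (cat_adj l) x) + cat_W l x) * cpsi l x = (4 + WB l j) * PS j"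
    proof -
      have a0: "x \<le> 2 * l" using m by linarith
      show ?thesis unfolding D N card4 j_def using a0 cat_W_sp[of x l] by (simp add: cpsi_def)
    qed
    have core: "(4 + WB l j) * PS j = PS (cat_level l (x - 1)) + PS (cat_level l (x + 1)) + 2 * (PS j * rC l j)"
    proof -
      consider (a) "x < l" | (b) "x = l" | (c) "l < x" by linarith
      then show ?thesis
      proof cases
        case a
        have lv: "j = x" "cat_level l (x - 1) = x - 1" "cat_level l (x + 1) = x + 1"
          unfolding j_def cat_level_def using a by auto
        show ?thesis unfolding lv using core_mid[OF l m(1)] a by simp
      next
        case b
        have lv: "j = l" "cat_level l (x - 1) = l - 1" "cat_level l (x + 1) = l - 1"
          unfolding j_def cat_level_def using b l by auto
        show ?thesis unfolding lv using core_l[OF l] by simp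
      next
        case c
        have lv: "cat_level l (x - 1) = j + 1" "cat_level l (x + 1) = j - 1" "1 \<le> j" "j + 1 \<le> l"
          unfolding j_def cat_level_def using c m by auto
        show ?thesis unfolding lv(1,2) using core_mid[OF l lv(3,4)] by simp
      qed
    qed
    show ?thesis unfolding S N sum4 lhs core ..
  qed
qed

lemma cat_gstate: assumes l: "2 \<le> l"
  shows "gstate (cat_n l) (cat_adj l) (cat_W l) (cpsi l)"
  unfolding gstate_def using cat_sym cat_irr cpsi_pos[OF l] cat_eq[OF l] by blast


lemma cat_conn: assumes l: "2 \<le> l"
  and f: "\<And>x y. x < cat_n l \<Longrightarrow> y < cat_n l \<Longrightarrow> cat_adj l x y \<Longrightarrow> f x = f y"
  and x: "x < cat_n l"
  shows "f x = f 0"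
proof -
  have sp: "f i = f 0" if "i \<le> 2 * l" for i
    using that
  proof (induction i)
    case 0 then show ?case by simp
  next
    case (Suc i)
    have "f (Suc i) = f i"
      by (rule f[symmetric]) (use Suc.prems l in \<open>auto simp: cat_n_def cat_adj_def\<close>)
    with Suc show ?case by simp
  qed
  show ?thesis
  proof (cases "x \<le> 2 * l")
    case True then show ?thesis by (rule sp)
  next
    case False
    hence v: "2 * l < x" by simp
    note pr = par_range[OF l v x]
    have "f x = f (cat_par l x)"
      by (rule f) (use x v pr l in \<open>auto simp: cat_n_def cat_adj_def\<close>)
    also have "\<dots> = f 0" by (rule sp) (use pr in linarith)
    finally show ?thesis .
  qed
qed

lemma cat_deg: assumes l: "2 \<le> l" and x: "x < cat_n l"
  shows "degree_of (cat_n l) (cat_adj l) x \<le> 4"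
proof -
  have D: "degree_of (cat_n l) (cat_adj l) x = card {y. y < cat_n l \<and> cat_adj l x y}"
    unfolding degree_of_def ..
  consider (z) "x = 0" | (t) "x = 2 * l" | (m) "1 \<le> x" "x \<le> 2 * l - 1" | (p) "2 * l < x"
    by linarith
  then show ?thesis
  proof cases
    case z then show ?thesis unfolding D using nbr_0[OF l] by simp
  next
    case t then show ?thesis unfolding D using nbr_2l[OF l] by simp
  next
    case p then show ?thesis unfolding D using nbr_pend[OF l p x] by simp
  next
    case m
    have "card {x - 1, x + 1, 2 * l + 2 * x - 1, 2 * l + 2 * x} \<le> 4"
      using card_length[of "[x - 1, x + 1, 2 * l + 2 * x - 1, 2 * l + 2 * x]"] by simp
    then show ?thesis unfolding D nbr_mid[OF l m] .
  qed
qed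

lemma cat_W_le: assumes l: "2 \<le> l" and x: "x < cat_n l" shows "cat_W l x \<le> 7"
proof (cases "x \<le> 2 * l")
  case True
  have "0 \<le> real (cat_level l x) / (4 * real l)" by simp
  hence e: "- 1/2 - real (cat_level l x) / (4 * real l) \<le> 7" by linarith
  show ?thesis unfolding cat_W_sp[OF True] WB_def using e by simp
next
  case False
  hence v: "2 * l < x" by simp
  note lr = lev_range[OF par_range[OF l v x]]
  show ?thesis unfolding cat_W_pd[OF False] by (rule WC_facts(2)[OF l lr])
qed

lemma cat_K: assumes l: "2 \<le> l" and x: "x < cat_n l"
  shows "real (degree_of (cat_n l) (cat_adj l) x) + cat_W l x \<le> 11"
  using cat_deg[OF l x] cat_W_le[OF l x] by linarith


definition sg :: "nat \<Rightarrow> nat \<Rightarrow> real" where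
  "sg l v = (let p = (if v \<le> 2 * l then v else cat_par l v) in if p < l then 1 else if p = l then 0 else -1)"

definition rf :: "nat \<Rightarrow> nat \<Rightarrow> nat" where
  "rf l v = (if v \<le> 2 * l then 2 * l - v else 2 * l + 1 + 2 * (2 * l - cat_par l v - 1) + (v - (2 * l + 1)) mod 2)"

lemma pend_decomp: assumes "2 * l < v"
  shows "v = 2 * l + 1 + 2 * (cat_par l v - 1) + (v - (2 * l + 1)) mod 2" "1 \<le> cat_par l v"
proof -
  define t where "t = v - (2 * l + 1)"
  have "t = 2 * (t div 2) + t mod 2" by simp
  thus "v = 2 * l + 1 + 2 * (cat_par l v - 1) + (v - (2 * l + 1)) mod 2"
    unfolding cat_par_def t_def[symmetric] using assms unfolding t_def by simp
  show "1 \<le> cat_par l v" unfolding cat_par_def by simp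
qed

lemma par_of: assumes "e < 2"
  shows "cat_par l (2 * l + 1 + 2 * q + e) = q + 1" "(2 * l + 1 + 2 * q + e - (2 * l + 1)) mod 2 = e"
  using assms unfolding cat_par_def by auto

lemma rf_facts: assumes l: "2 \<le> l" and v: "v < cat_n l"
  shows "rf l v < cat_n l" "rf l (rf l v) = v" "cpsi l (rf l v) = cpsi l v" "sg l (rf l v) = - sg l v"
proof -
  have lev: "cat_level l (2 * l - p) = cat_level l p" if "p \<le> 2 * l" for p
    unfolding cat_level_def using that by auto
  have "rf l v < cat_n l \<and> rf l (rf l v) = v \<and> cpsi l (rf l v) = cpsi l v \<and> sg l (rf l v) = - sg l v"
  proof (cases "v \<le> 2 * l")
    case True
    have r: "rf l v = 2 * l - v" unfolding rf_def using True by simp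
    have rr: "rf l (2 * l - v) = v" unfolding rf_def using True by simp
    show ?thesis unfolding r rr using True l lev[OF True]
      by (auto simp: cat_n_def cpsi_def sg_def Let_def)
  next
    case False
    hence v2: "2 * l < v" by simp
    define p where "p = cat_par l v"
    define e where "e = (v - (2 * l + 1)) mod 2"
    have e2: "e < 2" unfolding e_def by simp
    note pr = par_range[OF l v2 v]
    have vd: "v = 2 * l + 1 + 2 * (p - 1) + e" unfolding p_def e_def by (rule pend_decomp[OF v2])
    have r: "rf l v = 2 * l + 1 + 2 * (2 * l - p - 1) + e" unfolding rf_def p_def e_def using False by simp
    have q: "2 * l - p - 1 + 1 = 2 * l - p" using pr unfolding p_def by simp
    have pr1: "cat_par l (rf l v) = 2 * l - p" unfolding r par_of(1)[OF e2] q ..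
    have pr2: "(rf l v - (2 * l + 1)) mod 2 = e" unfolding r by (rule par_of(2)[OF e2])
    have rv2: "\<not> rf l v \<le> 2 * l" unfolding r by simp
    have lt: "rf l v < cat_n l" unfolding r using pr e2 l unfolding p_def cat_n_def by simp
    have rr: "rf l (rf l v) = v"
    proof -
      have "rf l (rf l v) = 2 * l + 1 + 2 * (2 * l - (2 * l - p) - 1) + e"
        unfolding rf_def[of l "rf l v"] using rv2 pr1 pr2 by simp
      also have "2 * l - (2 * l - p) - 1 = p - 1" using pr unfolding p_def by simp
      finally show ?thesis using vd by simp
    qed
    have ps: "cpsi l (rf l v) = cpsi l v"
      unfolding cpsi_def using rv2 False pr1 lev[of p] pr unfolding p_def by simp
    have sgv: "sg l (rf l v) = - sg l v"
      unfolding sg_def Let_def using rv2 False pr1 pr unfolding p_def by auto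
    show ?thesis using lt rr ps sgv by simp
  qed
  thus "rf l v < cat_n l" "rf l (rf l v) = v" "cpsi l (rf l v) = cpsi l v" "sg l (rf l v) = - sg l v"
    by auto
qed

lemma sg_orth: assumes l: "2 \<le> l"
  shows "(\<Sum>i<cat_n l. sg l i * (cpsi l i)^2) = 0"
proof -
  define g where "g i = sg l i * (cpsi l i)^2" for i
  have "(\<Sum>i<cat_n l. g i) = (\<Sum>i<cat_n l. g (rf l i))"
    by (rule sum.reindex_bij_witness[of _ "rf l" "rf l"]) (auto simp: rf_facts[OF l])
  also have "\<dots> = (\<Sum>i<cat_n l. - g i)"
    by (intro sum.cong refl) (simp add: g_def rf_facts[OF l])
  finally have "(\<Sum>i<cat_n l. g i) = - (\<Sum>i<cat_n l. g i)" by (simp add: sum_negf)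
  thus ?thesis unfolding g_def by simp
qed


definition phiv :: "nat \<Rightarrow> complex vec" where
  "phiv l = vec (cat_n l) (\<lambda>i. complex_of_real (sg l i * cpsi l i))"

lemma sg_spine: "v \<le> 2 * l \<Longrightarrow> sg l v = (if v < l then 1 else if v = l then 0 else -1)"
  unfolding sg_def Let_def by simp

lemma sg_adj: assumes l: "2 \<le> l" and x: "x < cat_n l" and y: "y < cat_n l" and E: "cat_adj l x y"
  and T: "(x, y) \<notin> {(l - 1, l), (l, l - 1), (l, l + 1), (l + 1, l)}"
  shows "sg l x = sg l y"
proof -
  consider (s) "x \<le> 2 * l" "y \<le> 2 * l" "x = y + 1 \<or> y = x + 1"
    | (a) "2 * l < x" "y = cat_par l x" | (b) "2 * l < y" "x = cat_par l y"
    using E unfolding cat_adj_def by auto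
  then show ?thesis
  proof cases
    case s
    then show ?thesis unfolding sg_spine[OF s(1)] sg_spine[OF s(2)] using T l by auto
  next
    case a
    have "y \<le> 2 * l" using par_range[OF l a(1) x] a(2) by linarith
    then show ?thesis unfolding sg_def Let_def using a by simp
  next
    case b
    have "x \<le> 2 * l" using par_range[OF l b(1) y] b(2) by linarith
    then show ?thesis unfolding sg_def Let_def using b by simp
  qed
qed

lemma phi_gsf: assumes l: "2 \<le> l"
  shows "gstate.gsf (cat_n l) (cat_adj l) (cpsi l) (phiv l) = 2 * cpsi l (l - 1) * cpsi l l"
proof -
  interpret G: gstate "cat_n l" "cat_adj l" "cat_W l" "cpsi l" by (rule cat_gstate[OF l])
  define n where "n = cat_n l"
  define T where "T = {(l - 1, l), (l, l - 1), (l, l + 1), (l + 1, l)}"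
  define c where "c = cpsi l (l - 1) * cpsi l l / 2"
  define F where "F x y = (if cat_adj l x y then cpsi l x * cpsi l y * (cmod (phiv l $ x / of_real (cpsi l x) - phiv l $ y / of_real (cpsi l y)))^2 / 2 else 0)" for x y
  have nl: "l + 1 < n" unfolding n_def cat_n_def using l by simp
  have Tsub: "T \<subseteq> {..<n} \<times> {..<n}" unfolding T_def using nl by auto
  have quot: "phiv l $ x / of_real (cpsi l x) = of_real (sg l x)" if "x < n" for x
    using that cpsi_pos[OF l, of x] unfolding phiv_def n_def by simp
  have F0: "F x y = 0" if "x < n" "y < n" "(x, y) \<notin> T" for x y
  proof (cases "cat_adj l x y")
    case True
    have "sg l x = sg l y" by (rule sg_adj[OF l _ _ True]) (use that in \<open>auto simp: n_def T_def\<close>)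
    then show ?thesis unfolding F_def using quot[OF that(1)] quot[OF that(2)] by simp
  qed (simp add: F_def)
  have psl: "cpsi l (l + 1) = cpsi l (l - 1)"
    unfolding cpsi_def cat_level_def using l by auto
  have sgs: "sg l (l - 1) = 1" "sg l l = 0" "sg l (l + 1) = -1" using l by (auto simp: sg_spine)
  have adjs: "cat_adj l (l - 1) l" "cat_adj l l (l - 1)" "cat_adj l l (l + 1)" "cat_adj l (l + 1) l"
    using l unfolding cat_adj_def by auto
  have FT: "F x y = c" if "(x, y) \<in> T" for x y
  proof -
    have xy: "x < n" "y < n" using that Tsub by auto
    show ?thesis using that adjs sgs psl unfolding F_def quot[OF xy(1)] quot[OF xy(2)] c_def T_def
      by (auto simp: algebra_simps)
  qed
  have "G.gsf (phiv l) = (\<Sum>x<n. \<Sum>y<n. F x y)" unfolding G.gsf_def F_def n_def ..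
  also have "\<dots> = (\<Sum>p\<in>{..<n} \<times> {..<n}. F (fst p) (snd p))"
    by (simp add: sum.cartesian_product split_def)
  also have "\<dots> = (\<Sum>p\<in>T. F (fst p) (snd p))"
    by (rule sum.mono_neutral_right) (use Tsub F0 in auto)
  also have "\<dots> = (\<Sum>p\<in>T. c)" by (intro sum.cong refl) (use FT in auto)
  also have "\<dots> = 4 * c"
  proof -
    have ne: "l - 1 \<noteq> l" "l - 1 \<noteq> l + 1" using l by arith+
    have "card T = 4" unfolding T_def using ne by (simp add: card_insert_if)
    thus ?thesis by simp
  qed
  finally show ?thesis unfolding c_def by simp
qed

lemma phi_nsq: assumes l: "2 \<le> l" shows "4 \<le> nsq (cat_n l) (phiv l)"
proof -
  define f where "f i = (cmod (phiv l $ i))^2" for i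
  have fv: "f i = (sg l i * cpsi l i)^2" if "i < cat_n l" for i
    unfolding f_def phiv_def using that by (simp add: norm_mult power_mult_distrib)
  have A: "{0, 1, 2 * l - 1, 2 * l} \<subseteq> {..<cat_n l}" using l unfolding cat_n_def by auto
  have "sum f {0, 1, 2 * l - 1, 2 * l} \<le> sum f {..<cat_n l}"
    by (rule sum_mono2) (use A in \<open>auto simp: f_def\<close>)
  moreover have "sum f {0, 1, 2 * l - 1, 2 * l} = 4"
  proof -
    have v: "f 0 = 1" "f 1 = 1" "f (2 * l - 1) = 1" "f (2 * l) = 1"
      using A l by (auto simp: fv sg_spine cpsi_def cat_level_def PS_def)
    show ?thesis using l v by simp
  qed
  ultimately show ?thesis unfolding nsq_def f_def by simp
qed

lemma phi_small: assumes l: "2 \<le> l"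
  shows "gstate.gsf (cat_n l) (cat_adj l) (cpsi l) (phiv l) < 2 * (2/3) ^ (2 * l - 1) * nsq (cat_n l) (phiv l)"
proof -
  define m where "m = l - 2"
  have lm: "l = m + 2" unfolding m_def using l by simp
  have p1: "cpsi l (l - 1) = (2/3)^m" unfolding cpsi_def cat_level_def PS_def lm by auto
  have p2: "cpsi l l = (2/3)^m * (2/3)" unfolding cpsi_def cat_level_def PS_def lm by auto
  have e: "2 * (2/3::real) ^ (2 * l - 1) = (2/3)^m * (2/3)^m * (16/27)"
  proof -
    have "2 * l - 1 = m + m + 3" unfolding lm by simp
    hence "(2/3::real) ^ (2 * l - 1) = (2/3)^(m + m + 3)" by simp
    also have "\<dots> = (2/3)^m * (2/3)^m * (2/3)^3" by (simp only: power_add)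
    finally have "(2/3::real) ^ (2 * l - 1) = (2/3)^m * (2/3)^m * (2/3)^3" .
    thus ?thesis by (simp add: power3_eq_cube)
  qed
  have "2 * cpsi l (l - 1) * cpsi l l < 2 * (2/3) ^ (2 * l - 1) * 4"
    unfolding p1 p2 e by simp
  also have "\<dots> \<le> 2 * (2/3) ^ (2 * l - 1) * nsq (cat_n l) (phiv l)"
    using phi_nsq[OF l] by (intro mult_left_mono) auto
  finally show ?thesis unfolding phi_gsf[OF l] .
qed


lemma WB_lt: assumes l: "2 \<le> l" and jk: "j < k" "k \<le> l" shows "WB l k < WB l j"
proof -
  have l0: "0 < real l" using l by simp
  show ?thesis
  proof (cases "j = 0")
    case True
    have "0 < real k / (4 * real l)" using jk l0 by simp
    hence e: "- 1/2 - real k / (4 * real l) < 0" by linarith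
    then show ?thesis unfolding WB_def using True jk by simp
  next
    case False
    have "real j / (4 * real l) < real k / (4 * real l)" using jk l0 by (simp add: divide_strict_right_mono)
    then show ?thesis unfolding WB_def using False jk by simp
  qed
qed

lemma W_pend_pos: assumes l: "2 \<le> l" and v: "2 * l < v" "v < cat_n l" shows "0 < cat_W l v"
proof -
  note lr = lev_range[OF par_range[OF l v]]
  show ?thesis using cat_W_pd[of v l] v(1) WC_facts(1)[OF l lr] by simp
qed

lemma W_spine_le0: assumes "p \<le> 2 * l" shows "cat_W l p \<le> 0"
proof -
  have "0 \<le> real (cat_level l p) / (4 * real l)" by simp
  hence e: "- 1/2 - real (cat_level l p) / (4 * real l) \<le> 0" by linarith
  thus ?thesis unfolding cat_W_sp[OF assms] WB_def by simp
qed

lemma conj1: assumes l: "2 \<le> l" and v: "v < cat_n l" "v \<noteq> l"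
  shows "\<exists>u < cat_n l. cat_adj l v u \<and> cat_W l u < cat_W l v"
proof -
  have nl: "2 * l < cat_n l" using l unfolding cat_n_def by simp
  consider (a) "v < l" | (b) "l < v" "v \<le> 2 * l" | (c) "2 * l < v" using v by linarith
  then show ?thesis
  proof cases
    case a
    have lv: "cat_level l v = v" "cat_level l (v + 1) = v + 1" unfolding cat_level_def using a by auto
    have w: "cat_W l (v + 1) = WB l (v + 1)" "cat_W l v = WB l v"
      using cat_W_sp[of "v + 1" l] cat_W_sp[of v l] lv a by auto
    have "cat_W l (v + 1) < cat_W l v"
      unfolding w using a l by (auto intro!: WB_lt)
    moreover have "cat_adj l v (v + 1)" unfolding cat_adj_def using a by simp
    moreover have "v + 1 < cat_n l" using a nl by simp
    ultimately show ?thesis by blast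
  next
    case b
    have lv: "cat_level l v = 2 * l - v" "cat_level l (v - 1) = 2 * l - v + 1" unfolding cat_level_def using b by auto
    have w: "cat_W l (v - 1) = WB l (2 * l - v + 1)" "cat_W l v = WB l (2 * l - v)"
      using cat_W_sp[of "v - 1" l] cat_W_sp[of v l] lv b by auto
    have "cat_W l (v - 1) < cat_W l v"
      unfolding w using b l by (auto intro!: WB_lt)
    moreover have "cat_adj l v (v - 1)" unfolding cat_adj_def using b by auto
    moreover have "v - 1 < cat_n l" using b nl by simp
    ultimately show ?thesis by blast
  next
    case c
    note pr = par_range[OF l c v(1)]
    have p2: "cat_par l v \<le> 2 * l" using pr by linarith
    have "cat_W l (cat_par l v) < cat_W l v"
      using W_spine_le0[OF p2] W_pend_pos[OF l c v(1)] by simp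
    moreover have "cat_adj l v (cat_par l v)" unfolding cat_adj_def using c v by simp
    moreover have "cat_par l v < cat_n l" using p2 nl by simp
    ultimately show ?thesis by blast
  qed
qed

lemma conj3: assumes l: "2 \<le> l" and v: "v < cat_n l" "v \<noteq> l"
  shows "cat_W l l < cat_W l v"
proof (cases "v \<le> 2 * l")
  case True
  have ll: "cat_level l l = l" unfolding cat_level_def by simp
  have lv: "cat_level l v < l" unfolding cat_level_def using v True by auto
  have wl: "cat_W l l = WB l l" using cat_W_sp[of l l] ll by simp
  show ?thesis unfolding cat_W_sp[OF True] wl using WB_lt[OF l lv] by simp
next
  case False
  hence c: "2 * l < v" by simp
  have "cat_W l l \<le> 0" by (rule W_spine_le0) simp
  thus ?thesis using W_pend_pos[OF l c v(1)] by simp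
qed

lemma conj2: assumes l: "2 \<le> l"
  shows "{x. x < cat_n l \<and> local_min (cat_n l) (cat_adj l) (cat_W l) x} = {l}"
proof -
  have ln: "l < cat_n l" using l unfolding cat_n_def by simp
  have "local_min (cat_n l) (cat_adj l) (cat_W l) l"
    unfolding local_min_def using conj3[OF l] cat_irr[of l l] by (metis less_imp_le)
  moreover have "\<not> local_min (cat_n l) (cat_adj l) (cat_W l) x" if "x < cat_n l" "x \<noteq> l" for x
    using conj1[OF l that] unfolding local_min_def by (metis not_le)
  ultimately show ?thesis using ln by auto
qed

lemma gap: assumes l: "2 \<le> l"
  shows "spectral_gap (hamiltonian (cat_n l) (cat_adj l) (cat_W l)) < 2 * (2/3) ^ (2 * l - 1)"
proof -
  interpret G: gstate "cat_n l" "cat_adj l" "cat_W l" "cpsi l" by (rule cat_gstate[OF l])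
  define n where "n = cat_n l"
  have n0: "0 < cat_n l" using l unfolding cat_n_def by simp
  have phi: "phiv l \<in> carrier_vec (cat_n l)" unfolding phiv_def by simp
  have orth: "(\<Sum>i<cat_n l. complex_of_real (cpsi l i) * phiv l $ i) = 0"
  proof -
    have "(\<Sum>i<cat_n l. complex_of_real (cpsi l i) * phiv l $ i) = complex_of_real (\<Sum>i<cat_n l. sg l i * (cpsi l i)^2)"
      unfolding of_real_sum by (intro sum.cong refl) (simp add: phiv_def power2_eq_square)
    thus ?thesis using sg_orth[OF l] by simp
  qed
  have phipos: "0 < nsq (cat_n l) (phiv l)" using phi_nsq[OF l] by simp
  obtain lam where lam: "eigenvalue G.H lam" "lam \<noteq> 0" "Re lam < 2 * (2/3) ^ (2 * l - 1)"
    using G.exists_small_eig[OF cat_conn[OF l] n0 cat_K[OF l] _ phi orth phipos phi_small[OF l]] by auto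
  have nonneg: "0 \<le> Re z" if "eigenvalue G.H z" for z
  proof -
    from that obtain v where ev: "eigenvector G.H v z" unfolding eigenvalue_def by auto
    show ?thesis unfolding G.eigen(1)[OF ev] using G.gsf_nonneg[of v] G.eigen(2)[OF ev] by simp
  qed
  have lampos: "0 < Re lam"
  proof -
    from lam(1) obtain v where ev: "eigenvector G.H v lam" unfolding eigenvalue_def by auto
    have "Re lam \<noteq> 0" using lam(2) G.eigen(1)[OF ev] by auto
    thus ?thesis using nonneg[OF lam(1)] by simp
  qed
  have zero: "eigenvalue G.H 0"
  proof -
    define pv where "pv = vec (cat_n l) (\<lambda>i. complex_of_real (cpsi l i))"
    have pvc: "pv \<in> carrier_vec (cat_n l)" unfolding pv_def by simp
    have "G.H *\<^sub>v pv = 0 \<cdot>\<^sub>v pv"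
    proof (rule eq_vecI)
      fix i assume "i < dim_vec (0 \<cdot>\<^sub>v pv)"
      hence i: "i < cat_n l" unfolding pv_def by simp
      have "(G.H *\<^sub>v pv) $ i = (\<Sum>j<cat_n l. complex_of_real (hr (cat_n l) (cat_adj l) (cat_W l) i j) * pv $ j)"
        by (rule G.Hsum[OF pvc i])
      also have "\<dots> = complex_of_real (\<Sum>j<cat_n l. hr (cat_n l) (cat_adj l) (cat_W l) i j * cpsi l j)"
        unfolding of_real_sum by (intro sum.cong refl) (simp add: pv_def)
      also have "\<dots> = 0" using G.hr_psi[OF i] by simp
      finally show "(G.H *\<^sub>v pv) $ i = (0 \<cdot>\<^sub>v pv) $ i" using i unfolding pv_def by simp
    qed (simp add: pv_def hamiltonian_carrier[THEN carrier_matD(1)])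
    moreover have "pv \<noteq> 0\<^sub>v (cat_n l)"
    proof
      assume "pv = 0\<^sub>v (cat_n l)"
      hence "pv $ 0 = 0" using n0 by simp
      thus False using cpsi_pos[OF l n0] unfolding pv_def using n0 by simp
    qed
    ultimately have "eigenvector G.H pv 0" unfolding eigenvector_def using pvc hamiltonian_carrier[of "cat_n l" "cat_adj l" "cat_W l"] by auto
    thus ?thesis unfolding eigenvalue_def by auto
  qed
  show ?thesis by (rule gap_from_eigs[OF hamiltonian_carrier nonneg zero lam(1) lampos lam(3)])
qed

theorem mainTheorem1:
  fixes l :: nat
  assumes "2 \<le> l"
  shows "(\<forall>v < cat_n l. v \<noteq> l \<longrightarrow>
            (\<exists>u < cat_n l. cat_adj l v u \<and> cat_W l u < cat_W l v))
       \<and> {x. x < cat_n l \<and> local_min (cat_n l) (cat_adj l) (cat_W l) x} = {l}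
       \<and> (\<forall>v < cat_n l. v \<noteq> l \<longrightarrow> cat_W l l < cat_W l v)
       \<and> spectral_gap (hamiltonian (cat_n l) (cat_adj l) (cat_W l)) < 2 * (2/3) ^ (2 * l - 1)"
  using conj1[OF assms] conj2[OF assms] conj3[OF assms] gap[OF assms] by blast


end
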